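(* For every real random variable $X$ (no moment assumptions), every $\mathsf{snr}>0$ and every $n=0,1,2,\dots$, $$\mathbb{E}\Big[\big|X-\mathbb{E}[X\mid \sqrt{\mathsf{snr}}X+N]\big|^n\Big]\le \Big(\frac{2}{\sqrt{\mathsf{snr}}}\Big)^n\sqrt{n!},$$ where $N\sim\mathcal N(0,1)$ is independent of $X$. *)

theory Defs
  imports "HOL-Probability.Probability"
begin

end

theory Submission imports Defs begin
lemma convex_pow_nonneg: "convex_on {0::real..} (\<lambda>x. x^n)"
proof (cases "even n")
  case True
  then show ?thesis using convex_power_even convex_on_subset by blast
next
  case False
  then show ?thesis using convex_power_odd by blast
qed

lemma convex_abs_pow: "convex_on (UNIV::real set) (\<lambda>x. \<bar>x\<bar>^n)"
proof (rule convex_onI)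
  fix t x y :: real assume t: "0 < t" "t < 1"
  have "\<bar>(1 - t) *\<^sub>R x + t *\<^sub>R y\<bar> ^ n \<le> ((1 - t) *\<^sub>R \<bar>x\<bar> + t *\<^sub>R \<bar>y\<bar>) ^ n"
    apply (rule power_mono) using t by (auto intro: order_trans[OF abs_triangle_ineq] simp: abs_mult)
  also have "\<dots> \<le> (1 - t) * \<bar>x\<bar>^n + t * \<bar>y\<bar>^n"
    using convex_onD[OF convex_pow_nonneg, of t "\<bar>x\<bar>" "\<bar>y\<bar>" n] t by auto
  finally show "\<bar>(1 - t) *\<^sub>R x + t *\<^sub>R y\<bar> ^ n \<le> (1 - t) * \<bar>x\<bar>^n + t * \<bar>y\<bar>^n" .
qed auto

lemma abs_diff_pow_le:
  fixes a b :: real assumes "n \<ge> 1"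
  shows "\<bar>a - b\<bar>^n \<le> 2^(n-1) * (\<bar>a\<bar>^n + \<bar>b\<bar>^n)"
proof -
  have "\<bar>a - b\<bar>^n \<le> (\<bar>a\<bar> + \<bar>b\<bar>)^n" by (rule power_mono) auto
  also have "\<dots> = 2^n * ((1/2) *\<^sub>R \<bar>a\<bar> + (1/2) *\<^sub>R \<bar>b\<bar>)^n"
    by (simp add: power_mult_distrib[symmetric] algebra_simps)
  also have "\<dots> \<le> 2^n * ((1/2) * \<bar>a\<bar>^n + (1/2) * \<bar>b\<bar>^n)"
    using convex_onD[OF convex_pow_nonneg, of "1/2" "\<bar>a\<bar>" "\<bar>b\<bar>" n]
    by (intro mult_left_mono) auto
  also have "\<dots> = 2^(n-1) * (\<bar>a\<bar>^n + \<bar>b\<bar>^n)"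
    using assms by (cases n) (auto simp: algebra_simps)
  finally show ?thesis .
qed

lemma fact_even_bound: "fact (2*k) \<le> (4::nat)^k * (fact k)^2"
proof (induction k)
  case (Suc k)
  have "fact (2 * Suc k) = (2*k+2)*(2*k+1)* (fact (2*k) :: nat)"
    by (simp add: algebra_simps)
  also have "\<dots> \<le> (2*k+2)*(2*k+1)*(4^k * (fact k)^2)"
    by (intro mult_left_mono) (use Suc in auto)
  also have "\<dots> \<le> (4*(k+1)^2) * (4^k * (fact k)^2)"
    by (intro mult_right_mono) (auto simp: power2_eq_square algebra_simps)
  also have "\<dots> = 4^Suc k * (fact (Suc k))^2"
    by (simp add: power2_eq_square algebra_simps)
  finally show ?case .
qed simp

lemma fact_odd_bound: "(4::nat)^k * (fact k)^2 \<le> fact (2*k+1)"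
proof (induction k)
  case (Suc k)
  have "(4::nat)^Suc k * (fact (Suc k))^2 = (4*(k+1)^2) * (4^k * (fact k)^2)"
    by (simp add: power2_eq_square algebra_simps)
  also have "\<dots> \<le> (2*k+3)*(2*k+2) * (4^k * (fact k)^2)"
    by (intro mult_right_mono) (auto simp: power2_eq_square algebra_simps)
  also have "\<dots> \<le> (2*k+3)*(2*k+2) * fact (2*k+1)"
    using Suc by simp
  also have "\<dots> = fact (2 * Suc k + 1)"
    by (simp add: algebra_simps)
  finally show ?case .
qed simp

lemma std_normal_abs_moment_le:
  "(\<integral>x. std_normal_density x * \<bar>x\<bar>^n \<partial>lborel) \<le> sqrt (fact n)"
proof (cases "even n")
  case True
  then obtain k where n: "n = 2*k" by auto
  have "(\<integral>x. std_normal_density x * \<bar>x\<bar>^n \<partial>lborel) = fact (2 * k) / (2^k * fact k)"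
    using integral_std_normal_moment_even[of k] n by (simp add: power_even_abs)
  also have "\<dots> \<le> sqrt (fact n)"
  proof -
    have "real (fact (2*k)) \<le> real (4^k * (fact k)^2)" using fact_even_bound[of k] by linarith
    then have A: "(fact (2*k) :: real) \<le> 4^k * (fact k)^2" by (simp add: of_nat_fact)
    have pos: "(0::real) < 2^k * fact k" by simp
    have "(fact (2 * k) / (2^k * fact k))^2 = fact (2*k) * (fact (2*k) / (4^k * (fact k)^2) :: real)"
      by (simp add: power2_eq_square power_mult_distrib field_simps flip: power_mult_distrib)
    also have "\<dots> \<le> fact (2*k) * 1"
      using A by (intro mult_left_mono) auto
    finally have "(fact (2 * k) / (2^k * fact k))^2 \<le> (fact n :: real)" using n by simp
    then show ?thesis using real_le_rsqrt by blast
  qed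
  finally show ?thesis .
next
  case False
  then obtain k where n: "n = 2*k+1" using oddE by blast
  have "(\<integral>x. std_normal_density x * \<bar>x\<bar>^n \<partial>lborel) = sqrt (2 / pi) * 2^k * fact k"
    using integral_std_normal_moment_abs_odd[of k] n by simp
  also have "\<dots> \<le> sqrt (fact n)"
  proof -
    have "real (4^k * (fact k)^2) \<le> real (fact (2*k+1))" using fact_odd_bound[of k] by linarith
    then have A: "4^k * (fact k)^2 \<le> (fact (2*k+1) :: real)" by (simp add: of_nat_fact algebra_simps)
    have "2 / pi \<le> 1" using pi_gt3 by simp
    have "(sqrt (2 / pi) * 2^k * fact k)^2 = (2/pi) * (4^k * (fact k)^2)"
    proof -
      have "(2::real)^k * 2^k = 4^k" by (simp flip: power_mult_distrib)
      then show ?thesis by (simp add: power_mult_distrib power2_eq_square algebra_simps)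
    qed
    also have "\<dots> \<le> 1 * (4^k * (fact k)^2)"
      using \<open>2/pi \<le> 1\<close> by (intro mult_right_mono) auto
    also have "\<dots> \<le> fact n" using A n by simp
    finally show ?thesis using real_le_rsqrt by blast
  qed
  finally show ?thesis .
qed

context sigma_finite_subalgebra
begin

lemma rce_indicator_mult:
  fixes Z :: "'a \<Rightarrow> real"
  assumes [measurable]: "Z \<in> borel_measurable M" and A[measurable]: "A \<in> sets F"
  shows "AE x in M. real_cond_exp M F (\<lambda>x. indicator A x * Z x) x = indicator A x * real_cond_exp M F Z x"
proof -
  have [measurable]: "(indicator A :: 'a \<Rightarrow> ennreal) \<in> borel_measurable F" by measurable
  have e1: "(\<lambda>x. ennreal (indicator A x * Z x)) = (\<lambda>x. indicator A x * ennreal (Z x))"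
    by (auto simp: indicator_def)
  have e2: "(\<lambda>x. ennreal (- (indicator A x * Z x))) = (\<lambda>x. indicator A x * ennreal (- Z x))"
    by (auto simp: indicator_def)
  have h1: "AE x in M. indicator A x * nn_cond_exp M F (\<lambda>x. ennreal (Z x)) x
      = nn_cond_exp M F (\<lambda>x. indicator A x * ennreal (Z x)) x"
    by (rule nn_cond_exp_prod) auto
  have h2: "AE x in M. indicator A x * nn_cond_exp M F (\<lambda>x. ennreal (- Z x)) x
      = nn_cond_exp M F (\<lambda>x. indicator A x * ennreal (- Z x)) x"
    by (rule nn_cond_exp_prod) auto
  show ?thesis using h1 h2
    unfolding real_cond_exp_def e1 e2
    by eventually_elim (auto simp: indicator_def)
qed

lemma rce_shift:
  fixes Z W V :: "'a \<Rightarrow> real"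
  assumes [measurable]: "Z \<in> borel_measurable M" "W \<in> borel_measurable F"
    and V: "integrable M V"
    and ZWV: "\<And>x. x \<in> space M \<Longrightarrow> Z x = W x + V x"
    and fin: "finite_measure M"
  shows "AE x in M. real_cond_exp M F Z x = W x + real_cond_exp M F V x"
proof -
  have [measurable]: "V \<in> borel_measurable M" using V by auto
  have [measurable]: "W \<in> borel_measurable M" using measurable_from_subalg[OF subalg] assms(2) by blast
  define A where "A k = {x \<in> space M. \<bar>W x\<bar> \<le> real k}" for k :: nat
  have sF: "space F = space M" using subalg by (simp add: subalgebra_def)
  have A[measurable]: "A k \<in> sets F" for k
  proof -
    have "{x \<in> space F. \<bar>W x\<bar> \<le> real k} \<in> sets F" by measurable
    then show ?thesis using sF by (simp add: A_def)
  qed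
  have AM[measurable]: "A k \<in> sets M" for k using A subalg by (auto simp: subalgebra_def)
  have key: "AE x in M. indicator (A k) x * real_cond_exp M F Z x
      = indicator (A k) x * W x + indicator (A k) x * real_cond_exp M F V x" for k
  proof -
    have iW: "integrable M (\<lambda>x. indicator (A k) x * W x)"
    proof (rule finite_measure.integrable_const_bound[OF fin, where B="real k"])
      show "AE x in M. norm (indicator (A k) x * W x) \<le> real k"
        by (auto simp: indicator_def A_def)
    qed measurable
    have iV: "integrable M (\<lambda>x. indicator (A k) x * V x)"
      using integrable_real_mult_indicator[OF AM V] by (simp add: mult.commute)
    have 1: "AE x in M. real_cond_exp M F (\<lambda>x. indicator (A k) x * Z x) x = indicator (A k) x * real_cond_exp M F Z x"
      by (rule rce_indicator_mult) auto
    have 2: "AE x in M. real_cond_exp M F (\<lambda>x. indicator (A k) x * Z x) x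
        = real_cond_exp M F (\<lambda>x. indicator (A k) x * W x + indicator (A k) x * V x) x"
      by (rule real_cond_exp_cong) (auto simp: ZWV algebra_simps)
    have 3: "AE x in M. real_cond_exp M F (\<lambda>x. indicator (A k) x * W x + indicator (A k) x * V x) x
        = real_cond_exp M F (\<lambda>x. indicator (A k) x * W x) x + real_cond_exp M F (\<lambda>x. indicator (A k) x * V x) x"
      by (rule real_cond_exp_add[OF iW iV])
    have 4: "AE x in M. real_cond_exp M F (\<lambda>x. indicator (A k) x * W x) x = indicator (A k) x * W x"
      by (rule real_cond_exp_F_meas[OF iW]) measurable
    have 5: "AE x in M. real_cond_exp M F (\<lambda>x. indicator (A k) x * V x) x = indicator (A k) x * real_cond_exp M F V x"
      by (rule rce_indicator_mult) auto
    show ?thesis using 1 2 3 4 5 by eventually_elim simp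
  qed
  have "AE x in M. \<forall>k. indicator (A k) x * real_cond_exp M F Z x
      = indicator (A k) x * W x + indicator (A k) x * real_cond_exp M F V x"
    using key by (simp add: AE_all_countable)
  then show ?thesis
  proof (rule AE_mp[OF _ AE_I2], intro impI)
    fix x assume x: "x \<in> space M" and H: "\<forall>k. indicator (A k) x * real_cond_exp M F Z x
      = indicator (A k) x * W x + indicator (A k) x * real_cond_exp M F V x"
    obtain k :: nat where "\<bar>W x\<bar> \<le> real k" using real_arch_simple by blast
    then have "x \<in> A k" using x by (simp add: A_def)
    then show "real_cond_exp M F Z x = W x + real_cond_exp M F V x" using H[rule_format, of k] by simp
  qed
qed

end
theorem proposition5:
  fixes M :: "'a measure" and X N :: "'a \<Rightarrow> real" and snr :: real and n :: nat
  assumes "prob_space M"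
    and "X \<in> borel_measurable M"
    and "distributed M lborel N std_normal_density"
    and "prob_space.indep_var M borel X borel N"
    and "snr > 0"
  shows "(\<integral>\<^sup>+ \<omega>. ennreal (\<bar>X \<omega> - real_cond_exp M
              (vimage_algebra (space M) (\<lambda>\<omega>. sqrt snr * X \<omega> + N \<omega>) borel) X \<omega>\<bar> ^ n) \<partial>M)
         \<le> ennreal ((2 / sqrt snr) ^ n * sqrt (fact n))"
proof -
  interpret prob_space M by fact
  define c where "c = sqrt snr"
  have c: "c > 0" using assms(5) by (simp add: c_def)
  have Dn: "distributed M lborel N std_normal_density" by fact
  have [measurable]: "X \<in> borel_measurable M" by fact
  have [measurable]: "N \<in> borel_measurable M"
    using distributed_measurable[OF Dn] by simp
  define Y where "Y = (\<lambda>\<omega>. c * X \<omega> + N \<omega>)"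
  have [measurable]: "Y \<in> borel_measurable M" unfolding Y_def by measurable
  define F where "F = vimage_algebra (space M) Y borel"
  have sub: "subalgebra M F"
    unfolding subalgebra_def F_def
    using sets_image_in_sets[OF refl \<open>Y \<in> borel_measurable M\<close>] by simp
  have "finite_measure_subalgebra M F"
    by (simp add: finite_measure_subalgebra_def finite_measure_subalgebra_axioms_def sub finite_measure_axioms)
  then interpret S: sigma_finite_subalgebra M F by (rule finite_measure_subalgebra_is_sigma_finite)
  have YF: "Y \<in> borel_measurable F" unfolding F_def by (rule measurable_vimage_algebra1) simp
  define W where "W = (\<lambda>\<omega>. Y \<omega> / c)"
  have WF: "W \<in> borel_measurable F" unfolding W_def using YF by measurable
  define V where "V = (\<lambda>\<omega>. - N \<omega> / c)"
  have intN: "integrable M N"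
    by (rule distributed_integrable_var[OF Dn]) (auto intro: integrable_normal_moment_nz_1)
  have intV: "integrable M V" unfolding V_def using intN by auto
  have [measurable]: "V \<in> borel_measurable M" using intV by auto
  have XWV: "X \<omega> = W \<omega> + V \<omega>" for \<omega> unfolding W_def V_def Y_def using c by (simp add: field_simps)
  have E1: "AE x in M. real_cond_exp M F X x = W x + real_cond_exp M F V x"
    by (rule S.rce_shift) (auto simp: WF intV XWV finite_measure_axioms)
  have intNn: "integrable M (\<lambda>\<omega>. \<bar>N \<omega>\<bar>^n)"
    using distributed_integrable[OF Dn, of "\<lambda>x. \<bar>x\<bar>^n"] integrable_std_normal_moment_abs[of n] by simp
  have intNeq: "(\<integral>\<omega>. \<bar>N \<omega>\<bar>^n \<partial>M) = (\<integral>x. std_normal_density x * \<bar>x\<bar>^n \<partial>lborel)"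
    using distributed_integral[OF Dn, of "\<lambda>x. \<bar>x\<bar>^n"] by simp
  have Vn: "\<bar>V \<omega>\<bar>^n = \<bar>N \<omega>\<bar>^n / c^n" for \<omega>
    unfolding V_def using c by (simp add: power_divide)
  have intVn: "integrable M (\<lambda>\<omega>. \<bar>V \<omega>\<bar>^n)" unfolding Vn using intNn by auto
  have intVn_eq: "(\<integral>\<omega>. \<bar>V \<omega>\<bar>^n \<partial>M) = (\<integral>\<omega>. \<bar>N \<omega>\<bar>^n \<partial>M) / c^n" unfolding Vn by simp
  have lhs_eq: "(\<integral>\<^sup>+ \<omega>. ennreal (\<bar>X \<omega> - real_cond_exp M F X \<omega>\<bar> ^ n) \<partial>M)
      = (\<integral>\<^sup>+ \<omega>. ennreal (\<bar>V \<omega> - real_cond_exp M F V \<omega>\<bar> ^ n) \<partial>M)"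
    by (rule nn_integral_cong_AE) (use E1 in \<open>auto simp: XWV\<close>)
  show ?thesis
  proof (cases "n = 0")
    case True
    then show ?thesis by (simp add: emeasure_space_1)
  next
    case False
    then have n1: "n \<ge> 1" by simp
    have J: "AE x in M. \<bar>real_cond_exp M F V x\<bar>^n \<le> real_cond_exp M F (\<lambda>x. \<bar>V x\<bar>^n) x"
      using S.real_cond_exp_jensens_inequality(2)[of V UNIV, OF intV _ _ intVn convex_abs_pow] by auto
    have intC: "integrable M (\<lambda>x. \<bar>real_cond_exp M F V x\<bar>^n)"
      using S.integrable_convex_cond_exp[of V UNIV, OF intV _ _ intVn convex_abs_pow] by auto
    have JI: "(\<integral>x. \<bar>real_cond_exp M F V x\<bar>^n \<partial>M) \<le> (\<integral>x. \<bar>V x\<bar>^n \<partial>M)"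
    proof -
      have "(\<integral>x. \<bar>real_cond_exp M F V x\<bar>^n \<partial>M) \<le> (\<integral>x. real_cond_exp M F (\<lambda>x. \<bar>V x\<bar>^n) x \<partial>M)"
        by (rule integral_mono_AE[OF intC _ J]) (use S.real_cond_exp_int(1)[OF intVn] in auto)
      also have "\<dots> = (\<integral>x. \<bar>V x\<bar>^n \<partial>M)" by (rule S.real_cond_exp_int(2)[OF intVn])
      finally show ?thesis .
    qed
    define B where "B = (\<lambda>x. 2^(n-1) * (\<bar>V x\<bar>^n + \<bar>real_cond_exp M F V x\<bar>^n))"
    have intB: "integrable M B" unfolding B_def using intVn intC by auto
    have DB: "\<bar>V x - real_cond_exp M F V x\<bar>^n \<le> B x" for x
      unfolding B_def by (rule abs_diff_pow_le[OF n1])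
    have intD: "integrable M (\<lambda>x. \<bar>V x - real_cond_exp M F V x\<bar>^n)"
    proof (rule Bochner_Integration.integrable_bound[OF intB])
      have "B x \<ge> 0" for x unfolding B_def by simp
      then show "AE x in M. norm (\<bar>V x - real_cond_exp M F V x\<bar>^n) \<le> norm (B x)"
        using DB by (intro AE_I2) simp
    qed measurable
    have "(\<integral>x. \<bar>V x - real_cond_exp M F V x\<bar>^n \<partial>M) \<le> (\<integral>x. B x \<partial>M)"
      by (rule integral_mono[OF intD intB DB])
    also have "\<dots> = 2^(n-1) * ((\<integral>x. \<bar>V x\<bar>^n \<partial>M) + (\<integral>x. \<bar>real_cond_exp M F V x\<bar>^n \<partial>M))"
      unfolding B_def using intVn intC by simp
    also have "\<dots> \<le> 2^(n-1) * (2 * (\<integral>x. \<bar>V x\<bar>^n \<partial>M))"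
      using JI by simp
    also have "\<dots> = 2^n * (\<integral>x. \<bar>V x\<bar>^n \<partial>M)"
      using n1 by (cases n) auto
    also have "\<dots> = 2^n / c^n * (\<integral>x. std_normal_density x * \<bar>x\<bar>^n \<partial>lborel)"
      unfolding intVn_eq intNeq by simp
    also have "\<dots> \<le> 2^n / c^n * sqrt (fact n)"
      by (rule mult_left_mono[OF std_normal_abs_moment_le]) (use c in simp)
    also have "\<dots> = (2 / c)^n * sqrt (fact n)" by (simp add: power_divide)
    finally have R: "(\<integral>x. \<bar>V x - real_cond_exp M F V x\<bar>^n \<partial>M) \<le> (2 / c)^n * sqrt (fact n)" .
    have "(\<integral>\<^sup>+ \<omega>. ennreal (\<bar>V \<omega> - real_cond_exp M F V \<omega>\<bar> ^ n) \<partial>M)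
        = ennreal (\<integral>x. \<bar>V x - real_cond_exp M F V x\<bar>^n \<partial>M)"
      by (rule nn_integral_eq_integral[OF intD]) auto
    also have "\<dots> \<le> ennreal ((2 / c)^n * sqrt (fact n))" using R by (rule ennreal_leI)
    finally show ?thesis using lhs_eq unfolding F_def Y_def c_def by simp
  qed
qed

end
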